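(* Let $\lambda>1$ and let $\psi=\Gamma'/\Gamma$ be the digamma function. Then the function $x\mapsto\lambda+x\big(\psi(x)-\psi(x+\lambda)\big)$, $x>0$, belongs to $\mathcal S_3$.
   Context: For $\tau>0$, $\mathcal S_\tau$ is the class of functions on $(0,\infty)$ of the form $g(x)=\int_0^\infty\frac{d\mu(t)}{(t+x)^{\tau}}+c$, where $\mu$ is a positive measure on $[0,\infty)$ making the integral converge for all $x>0$ and $c\ge 0$. *)

theory Defs
  imports "HOL-Analysis.Analysis"
begin

definition S_class :: "real \<Rightarrow> (real \<Rightarrow> real) set" where
  "S_class \<tau> = {g. \<exists>(\<mu>::real measure) (c::real).
      sets \<mu> = sets (restrict_space borel {0..}) \<and> c \<ge> 0 \<and>
      (\<forall>x>0. integrable \<mu> (\<lambda>t. 1 / (t + x) powr \<tau>) \<and>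
              g x = (\<integral>t. 1 / (t + x) powr \<tau> \<partial>\<mu>) + c)}"

end

theory Submission
  imports Defs "HOL-Real_Asymp.Real_Asymp"
begin


definition ppart :: "real \<Rightarrow> real" where "ppart s = max 0 s"

definition rhoJ :: "real \<Rightarrow> nat \<Rightarrow> real \<Rightarrow> real" where
  "rhoJ lam J t = 2 * (\<Sum>j<J. real j * ppart (t - real j))
                 - 2 * (\<Sum>n<J. (lam + real n) * ppart (t - lam - real n))"

definition rho :: "real \<Rightarrow> real \<Rightarrow> real" where
  "rho lam t = rhoJ lam (nat \<lceil>t\<rceil>) t"

lemma ppart_nonneg: "ppart s \<ge> 0" by (simp add: ppart_def)
lemma ppart_neg: "s \<le> 0 \<Longrightarrow> ppart s = 0" by (simp add: ppart_def)
lemma ppart_pos: "s \<ge> 0 \<Longrightarrow> ppart s = s" by (simp add: ppart_def)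

lemma rhoJ_Suc:
  assumes "lam > 0" "t \<le> real J"
  shows "rhoJ lam (Suc J) t = rhoJ lam J t"
  using assms by (simp add: rhoJ_def ppart_neg)

lemma rhoJ_stable:
  assumes "lam > 0" "t \<le> real J" "J \<le> J'"
  shows "rhoJ lam J' t = rhoJ lam J t"
  using assms(3)
proof (induction J' rule: dec_induct)
  case base then show ?case by simp
next
  case (step m)
  have "t \<le> real m" using assms(2) step(1) by linarith
  then show ?case using rhoJ_Suc[OF assms(1)] step by simp
qed

lemma rho_eq:
  assumes "lam > 0" "t \<le> real J"
  shows "rho lam t = rhoJ lam J t"
proof -
  have a: "t \<le> real (nat \<lceil>t\<rceil>)" by linarith
  have b: "nat \<lceil>t\<rceil> \<le> J" using assms(2) by linarith
  show ?thesis unfolding rho_def using rhoJ_stable[OF assms(1) a b] by simp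
qed

lemma sum_split_add:
  "(\<Sum>j<M+k. f j) = (\<Sum>j<k. f j) + (\<Sum>n<M. f (n+k))" for f :: "nat \<Rightarrow> real"
  by (induction M) (simp_all add: add.commute add.left_commute)

lemma sum_split_add2:
  "(\<Sum>j<M+k. f j) = (\<Sum>j<M. f j) + (\<Sum>n<k. f (M+n))" for f :: "nat \<Rightarrow> real"
  by (induction k) (simp_all add: add.commute add.left_commute)

lemma rhoJ_R:
  assumes lam: "lam > 1" and k: "k = nat \<lfloor>lam\<rfloor>" and t: "t \<le> real (M + k)"
  shows "rhoJ lam (M+k) t = 2 * (\<Sum>j<k. real j * ppart (t - real j))
     + 2 * (\<Sum>n<M. real (n+k) * ppart (t - real (n+k)) - (lam + real n) * ppart (t - lam - real n))"
proof -
  have kl: "real k \<le> lam" using k lam by linarith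
  have z: "(\<Sum>n<k. (lam + real (M+n)) * ppart (t - lam - real (M+n))) = 0"
    by (rule sum.neutral) (use t kl in \<open>auto intro!: ppart_neg\<close>)
  have e1: "(\<Sum>j<M+k. real j * ppart (t - real j)) = (\<Sum>j<k. real j * ppart (t - real j)) + (\<Sum>n<M. real (n+k) * ppart (t - real (n+k)))"
    by (rule sum_split_add)
  have e2: "(\<Sum>n<M+k. (lam + real n) * ppart (t - lam - real n)) = (\<Sum>n<M. (lam + real n) * ppart (t - lam - real n)) + 0"
    using sum_split_add2[where M=M and k=k and f="\<lambda>n. (lam + real n) * ppart (t - lam - real n)"] z by simp
  show ?thesis
    unfolding rhoJ_def e1 e2 by (simp add: sum_subtractf algebra_simps)
qed


lemma sum_twice_n: "2 * sum real {..<M} = real M * (real M - 1)"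
  by (induction M) (simp_all add: algebra_simps)

lemma rho_nat_nonneg:
  assumes lam: "lam > 1"
  shows "rho lam (real m) \<ge> 0"
proof -
  define k where "k = nat \<lfloor>lam\<rfloor>"
  define \<theta> where "\<theta> = lam - real k"
  have kl: "real k \<le> lam" "lam < real k + 1" using lam unfolding k_def by linarith+
  have th: "0 \<le> \<theta>" "\<theta> < 1" using kl unfolding \<theta>_def by linarith+
  have S1: "(\<Sum>j<J. real j * ppart (t - real j)) \<ge> 0" for J t
    by (intro sum_nonneg mult_nonneg_nonneg ppart_nonneg) simp
  show ?thesis
  proof (cases "m \<le> k")
    case True
    have "rho lam (real m) = rhoJ lam m (real m)" by (rule rho_eq) (use lam in auto)
    also have "(\<Sum>n<m. (lam + real n) * ppart (real m - lam - real n)) = 0"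
      by (rule sum.neutral) (use True kl in \<open>auto intro!: ppart_neg\<close>)
    hence "rhoJ lam m (real m) = 2 * (\<Sum>j<m. real j * ppart (real m - real j))"
      unfolding rhoJ_def by simp
    finally show ?thesis using S1 by simp
  next
    case False
    then obtain M where M: "m = M + k" by (metis add.commute le_add_diff_inverse nat_le_linear)
    have "rho lam (real m) = rhoJ lam (M+k) (real m)" by (rule rho_eq) (use lam M in auto)
    also have "\<dots> = 2 * (\<Sum>j<k. real j * ppart (real m - real j))
     + 2 * (\<Sum>n<M. real (n+k) * ppart (real m - real (n+k)) - (lam + real n) * ppart (real m - lam - real n))"
      by (rule rhoJ_R) (use lam M k_def in auto)
    also have "(\<Sum>n<M. real (n+k) * ppart (real m - real (n+k)) - (lam + real n) * ppart (real m - lam - real n))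
        = (\<Sum>n<M. \<theta> * (2 * real n) + \<theta> * (real k - real M + \<theta>))"
    proof (rule sum.cong)
      fix n assume "n \<in> {..<M}"
      hence n: "real n + 1 \<le> real M" by auto
      have p1: "ppart (real m - real (n+k)) = real M - real n" using n M by (simp add: ppart_pos)
      have p2: "ppart (real m - lam - real n) = real M - real n - \<theta>" using n M th
        by (subst ppart_pos) (auto simp: \<theta>_def)
      show "real (n+k) * ppart (real m - real (n+k)) - (lam + real n) * ppart (real m - lam - real n)
          = \<theta> * (2 * real n) + \<theta> * (real k - real M + \<theta>)"
        unfolding p1 p2 \<theta>_def by (simp add: algebra_simps)
    qed simp
    also have "\<dots> = \<theta> * (real M * (real M - 1)) + real M * (\<theta> * (real k - real M + \<theta>))"
      by (simp add: sum.distrib sum_distrib_left[symmetric] sum_twice_n)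
    also have "\<dots> = \<theta> * real M * (real k + \<theta> - 1)" by (simp add: algebra_simps)
    finally have "rho lam (real m) = 2 * (\<Sum>j<k. real j * ppart (real m - real j)) + 2 * (\<theta> * real M * (real k + \<theta> - 1))" .
    moreover have "\<theta> * real M * (real k + \<theta> - 1) \<ge> 0"
      using th kl lam \<theta>_def by (intro mult_nonneg_nonneg) auto
    ultimately show ?thesis using S1 by simp
  qed
qed

lemma ppart_convex:
  assumes "a \<ge> 0" "b \<ge> 0" "a + b = 1"
  shows "ppart (a * u + b * v) \<le> a * ppart u + b * ppart v"
proof -
  have "a * u \<le> a * ppart u" "b * v \<le> b * ppart v"
    using assms by (auto intro!: mult_left_mono simp: ppart_def)
  moreover have "0 \<le> a * ppart u + b * ppart v" using assms by (simp add: ppart_nonneg)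
  ultimately show ?thesis by (simp add: ppart_def)
qed

lemma rho_nonneg:
  assumes lam: "lam > 1"
  shows "rho lam t \<ge> 0"
proof (cases "t < 0")
  case True
  have "rho lam t = rhoJ lam 0 t" by (rule rho_eq) (use lam True in auto)
  then show ?thesis by (simp add: rhoJ_def)
next
  case False
  define m where "m = nat \<lfloor>t\<rfloor>"
  have tm: "real m \<le> t" "t < real m + 1" using False unfolding m_def by linarith+
  define a where "a = real m + 1 - t"
  define b where "b = t - real m"
  have ab: "a \<ge> 0" "b \<ge> 0" "a + b = 1" using tm unfolding a_def b_def by auto
  have lin: "(\<Sum>j<Suc m. real j * ppart (t - real j)) =
      a * (\<Sum>j<Suc m. real j * ppart (real m - real j)) + b * (\<Sum>j<Suc m. real j * ppart (real (Suc m) - real j))"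
    unfolding sum_distrib_left sum.distrib[symmetric]
  proof (rule sum.cong)
    fix j assume "j \<in> {..<Suc m}"
    hence j: "real j \<le> real m" by auto
    show "real j * ppart (t - real j) = a * (real j * ppart (real m - real j)) + b * (real j * ppart (real (Suc m) - real j))"
      using j tm by (simp add: ppart_pos a_def b_def algebra_simps)
  qed simp
  have cvx: "(\<Sum>n<Suc m. (lam + real n) * ppart (t - lam - real n)) \<le>
      a * (\<Sum>n<Suc m. (lam + real n) * ppart (real m - lam - real n)) + b * (\<Sum>n<Suc m. (lam + real n) * ppart (real (Suc m) - lam - real n))"
    unfolding sum_distrib_left sum.distrib[symmetric]
  proof (rule sum_mono)
    fix n assume "n \<in> {..<Suc m}"
    have eq: "t - lam - real n = a * (real m - lam - real n) + b * (real (Suc m) - lam - real n)"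
      using ab unfolding a_def b_def by (simp add: algebra_simps)
    have "ppart (t - lam - real n) \<le> a * ppart (real m - lam - real n) + b * ppart (real (Suc m) - lam - real n)"
      unfolding eq by (rule ppart_convex[OF ab])
    hence "(lam + real n) * ppart (t - lam - real n) \<le> (lam + real n) * (a * ppart (real m - lam - real n) + b * ppart (real (Suc m) - lam - real n))"
      using lam by (intro mult_left_mono) auto
    thus "(lam + real n) * ppart (t - lam - real n) \<le> a * ((lam + real n) * ppart (real m - lam - real n)) + b * ((lam + real n) * ppart (real (Suc m) - lam - real n))"
      by (simp add: algebra_simps)
  qed
  have "rhoJ lam (Suc m) t \<ge> a * rhoJ lam (Suc m) (real m) + b * rhoJ lam (Suc m) (real (Suc m))"
    unfolding rhoJ_def using lin cvx by (simp add: algebra_simps)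
  moreover have "rho lam t = rhoJ lam (Suc m) t" by (rule rho_eq) (use lam tm in auto)
  moreover have "rho lam (real m) = rhoJ lam (Suc m) (real m)" by (rule rho_eq) (use lam in auto)
  moreover have "rho lam (real (Suc m)) = rhoJ lam (Suc m) (real (Suc m))" by (rule rho_eq) (use lam in auto)
  moreover have "rho lam (real m) \<ge> 0" "rho lam (real (Suc m)) \<ge> 0"
    using rho_nat_nonneg[OF lam] by blast+
  ultimately show ?thesis using ab by (metis add_nonneg_nonneg mult_nonneg_nonneg order_trans)
qed



lemma ppart_sq_deriv: "((\<lambda>s. (ppart s)^2) has_real_derivative 2 * ppart s) (at s)"
proof (cases "s = 0")
  case False
  show ?thesis
  proof (cases "s > 0")
    case True
    have "((\<lambda>s. s^2) has_real_derivative 2 * ppart s) (at s)"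
      using True by (auto intro!: derivative_eq_intros simp: ppart_def)
    then show ?thesis
      by (rule has_field_derivative_transform_within_open[where S="{0<..}"])
         (use True in \<open>auto simp: ppart_def\<close>)
  next
    case False2: False
    have "((\<lambda>s. 0) has_real_derivative 0) (at s)" by simp
    then have "((\<lambda>s. 0) has_real_derivative 2 * ppart s) (at s)"
      using False False2 by (simp add: ppart_def)
    then show ?thesis
      by (rule has_field_derivative_transform_within_open[where S="{..<0}"])
         (use False False2 in \<open>auto simp: ppart_def\<close>)
  qed
next
  case True
  have "((\<lambda>y. ((ppart y)^2 - (ppart 0)^2) / (y - 0)) \<longlongrightarrow> 0) (at 0)"
  proof (rule Lim_null_comparison)
    show "\<forall>\<^sub>F y in at 0. norm (((ppart y)^2 - (ppart 0)^2) / (y - 0)) \<le> norm y"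
    proof (rule always_eventually, rule allI)
      fix y :: real
      show "norm (((ppart y)^2 - (ppart 0)^2) / (y - 0)) \<le> norm y"
        by (cases "y \<ge> 0") (auto simp: ppart_def power2_eq_square abs_mult)
    qed
    show "((\<lambda>y. norm y) \<longlongrightarrow> 0) (at (0::real))"
      by (auto intro!: tendsto_eq_intros)
  qed
  then show ?thesis using True by (simp add: has_field_derivative_iff ppart_def)
qed

lemma basic_integral:
  assumes a: "0 \<le> a" "a \<le> N" and x: "x > 0"
  shows "((\<lambda>t. a * ppart (t - a) / (t + x)^3) has_integral
           a * (N - a)^2 / (2 * (a + x) * (N + x)^2)) {0..N}"
proof -
  define G where "G t = a * (ppart (t - a))^2 / (2 * (a + x) * (t + x)^2)" for t
  have d: "(G has_real_derivative a * ppart (t - a) / (t + x)^3) (at t)" if t: "t \<ge> 0" for t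
  proof -
    have d0: "((\<lambda>s. (ppart (s - a))^2) has_real_derivative 2 * ppart (t - a) * 1) (at t)"
      by (rule DERIV_chain2[OF ppart_sq_deriv]) (auto intro!: derivative_eq_intros)
    have d1: "((\<lambda>t. 2 * (a + x) * (t + x)^2) has_real_derivative 2 * (a + x) * (2 * (t + x) * 1)) (at t)"
      by (auto intro!: derivative_eq_intros)
    have "(G has_real_derivative
       (a * (2 * ppart (t - a) * 1) * (2 * (a + x) * (t + x)^2) - a * (ppart (t - a))^2 * (2 * (a + x) * (2 * (t + x) * 1)))
         / ((2 * (a + x) * (t + x)^2) * (2 * (a + x) * (t + x)^2))) (at t)"
      unfolding G_def using t a x
      by (intro DERIV_divide DERIV_cmult d0 d1) (auto simp: add_pos_nonneg)
    moreover have "(a * (2 * ppart (t - a) * 1) * (2 * (a + x) * (t + x)^2) - a * (ppart (t - a))^2 * (2 * (a + x) * (2 * (t + x) * 1)))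
         / ((2 * (a + x) * (t + x)^2) * (2 * (a + x) * (t + x)^2)) = a * ppart (t - a) / (t + x)^3"
    proof (cases "t \<ge> a")
      case True
      have n: "t + x \<noteq> 0" "a + x \<noteq> 0" using t x a by auto
      have pp: "ppart (t - a) = t - a" using True by (simp add: ppart_pos)
      have "(a * (2 * (t - a) * 1) * (2 * (a + x) * (t + x)^2) - a * (t - a)^2 * (2 * (a + x) * (2 * (t + x) * 1)))
          = (a * (t - a)) * (4 * (a + x)^2 * (t + x))" by (simp add: algebra_simps power2_eq_square)
      moreover have "((2 * (a + x) * (t + x)^2) * (2 * (a + x) * (t + x)^2)) = (t + x)^3 * (4 * (a + x)^2 * (t + x))"
        by (simp add: algebra_simps power2_eq_square power3_eq_cube)
      ultimately show ?thesis using n unfolding pp by simp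
    next
      case False
      then show ?thesis by (simp add: ppart_neg)
    qed
    ultimately show ?thesis by simp
  qed
  have "((\<lambda>t. a * ppart (t - a) / (t + x)^3) has_integral G N - G 0) {0..N}"
    using a
    by (intro fundamental_theorem_of_calculus)
       (auto intro!: has_field_derivative_at_within d simp: has_real_derivative_iff_has_vector_derivative[symmetric])
  moreover have "G N - G 0 = a * (N - a)^2 / (2 * (a + x) * (N + x)^2)"
    using a by (simp add: G_def ppart_pos ppart_neg)
  ultimately show ?thesis by simp
qed


definition phi :: "real \<Rightarrow> real \<Rightarrow> real \<Rightarrow> real" where
  "phi N x a = a * (N - a)^2 / ((a + x) * (N + x)^2)"

lemma basic_integral2:
  assumes "0 \<le> a" "a \<le> N" "x > 0"
  shows "((\<lambda>t. 2 * (a * ppart (t - a) / (t + x)^3)) has_integral phi N x a) {0..N}"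
proof -
  have "((\<lambda>t. 2 * (a * ppart (t - a) / (t + x)^3)) has_integral 2 * (a * (N - a)^2 / (2 * (a + x) * (N + x)^2))) {0..N}"
    by (rule has_integral_mult_right[OF basic_integral[OF assms]])
  moreover have "2 * (a * (N - a)^2 / (2 * (a + x) * (N + x)^2)) = phi N x a"
  proof -
    have g: "\<And>u v. 2 * (u / (2 * v)) = u / (v::real)" by simp
    show ?thesis unfolding phi_def mult.assoc[of 2 "a+x"] by (rule g)
  qed
  ultimately show ?thesis by simp
qed

lemma int_rho:
  assumes lam: "lam > 1" and k: "k = nat \<lfloor>lam\<rfloor>" and x: "x > 0"
  shows "((\<lambda>t. rho lam t / (t + x)^3) has_integral
     (\<Sum>j<k. phi (real (M+k)) x (real j)) + (\<Sum>n<M. phi (real (M+k)) x (real (n+k)) - phi (real (M+k)) x (lam + real n)))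
     {0..real (M+k)}"
proof -
  define N where "N = real (M+k)"
  have kl: "real k \<le> lam" "lam < real k + 1" using lam unfolding k by linarith+
  have I1: "((\<lambda>t. \<Sum>j<k. 2 * (real j * ppart (t - real j) / (t + x)^3)) has_integral (\<Sum>j<k. phi N x (real j))) {0..N}"
    by (intro has_integral_sum basic_integral2) (use x in \<open>auto simp: N_def\<close>)
  have I2: "((\<lambda>t. \<Sum>n<M. 2 * (real (n+k) * ppart (t - real (n+k)) / (t + x)^3) - 2 * ((lam + real n) * ppart (t - (lam + real n)) / (t + x)^3))
     has_integral (\<Sum>n<M. phi N x (real (n+k)) - phi N x (lam + real n))) {0..N}"
    by (intro has_integral_sum has_integral_diff basic_integral2) (use x lam kl in \<open>auto simp: N_def\<close>)
  have "((\<lambda>t. (\<Sum>j<k. 2 * (real j * ppart (t - real j) / (t + x)^3)) + (\<Sum>n<M. 2 * (real (n+k) * ppart (t - real (n+k)) / (t + x)^3) - 2 * ((lam + real n) * ppart (t - (lam + real n)) / (t + x)^3)))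
     has_integral (\<Sum>j<k. phi N x (real j)) + (\<Sum>n<M. phi N x (real (n+k)) - phi N x (lam + real n))) {0..N}"
    by (rule has_integral_add[OF I1 I2])
  then show ?thesis
    unfolding N_def[symmetric]
  proof (rule has_integral_eq[rotated])
    fix t assume t: "t \<in> {0..N}"
    have "rho lam t = rhoJ lam (M+k) t" by (rule rho_eq) (use lam t in \<open>auto simp: N_def\<close>)
    also have "\<dots> = 2 * (\<Sum>j<k. real j * ppart (t - real j))
     + 2 * (\<Sum>n<M. real (n+k) * ppart (t - real (n+k)) - (lam + real n) * ppart (t - lam - real n))"
      by (rule rhoJ_R) (use lam k t in \<open>auto simp: N_def\<close>)
    finally show "(\<Sum>j<k. 2 * (real j * ppart (t - real j) / (t + x)^3)) + (\<Sum>n<M. 2 * (real (n+k) * ppart (t - real (n+k)) / (t + x)^3) - 2 * ((lam + real n) * ppart (t - (lam + real n)) / (t + x)^3))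
       = rho lam t / (t + x)^3"
      by (simp add: sum_divide_distrib sum_distrib_left diff_divide_distrib add_divide_distrib algebra_simps)
  qed
qed



lemma Digamma_diff_sums:
  fixes y z :: real
  assumes "y \<noteq> 0" "z \<noteq> 0"
  shows "(\<lambda>n. 1 / (z + real n) - 1 / (y + real n)) sums (Digamma y - Digamma z)"
proof -
  have sy: "(\<lambda>n. inverse (real (Suc n)) - inverse (y + real n)) sums (Digamma y + euler_mascheroni)"
    using summable_sums[OF summable_Digamma[OF assms(1)]] by (simp add: Digamma_def)
  have sz: "(\<lambda>n. inverse (real (Suc n)) - inverse (z + real n)) sums (Digamma z + euler_mascheroni)"
    using summable_sums[OF summable_Digamma[OF assms(2)]] by (simp add: Digamma_def)
  from sums_diff[OF sy sz] show ?thesis by (simp add: inverse_eq_divide)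
qed

lemma Digamma_add_nat:
  fixes x :: real
  assumes "x > 0"
  shows "Digamma (x + real k) = Digamma x + (\<Sum>j<k. 1 / (x + real j))"
proof (induction k)
  case 0 then show ?case by simp
next
  case (Suc k)
  have "Digamma (x + real (Suc k)) = Digamma ((x + real k) + 1)" by (simp add: add_ac)
  also have "\<dots> = Digamma (x + real k) + 1 / (x + real k)"
    by (rule Digamma_plus1) (use assms in auto)
  finally show ?case using Suc by simp
qed

lemma phi_alt:
  assumes "a + x \<noteq> 0" "N + x \<noteq> 0"
  shows "phi N x a = ((N + x - a)^2 + a * x) / (N + x)^2 - x / (a + x)"
proof -
  have e: "a * (N - a)^2 = ((N + x - a)^2 + a * x) * (a + x) - x * (N + x)^2"
    by (simp add: algebra_simps power2_eq_square)
  show ?thesis unfolding phi_def e using assms by (simp add: diff_divide_distrib)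
qed

lemma test_lim: "(\<lambda>M::nat. phi (real (M+k)) x (real j)) \<longlonglongrightarrow> real j / (real j + x)"
proof -
  have "(\<lambda>M::nat. ((real (M+k) - real j) / (real (M+k) + x))^2) \<longlonglongrightarrow> 1" by real_asymp
  hence "(\<lambda>M::nat. real j / (real j + x) * ((real (M+k) - real j) / (real (M+k) + x))^2) \<longlonglongrightarrow> real j / (real j + x) * 1"
    by (intro tendsto_mult tendsto_const)
  then show ?thesis unfolding phi_def by (simp add: power_divide)
qed


lemma I_lim:
  assumes lam: "lam > 1" and k: "k = nat \<lfloor>lam\<rfloor>" and x: "x > 0"
  shows "(\<lambda>M. (\<Sum>j<k. phi (real (M+k)) x (real j)) + (\<Sum>n<M. phi (real (M+k)) x (real (n+k)) - phi (real (M+k)) x (lam + real n)))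
     \<longlonglongrightarrow> lam + x * (Digamma x - Digamma (x + lam))"
proof -
  define \<theta> where "\<theta> = lam - real k"
  have kl: "real k \<le> lam" "lam < real k + 1" using lam unfolding k by linarith+
  have eq: "(\<Sum>n<M. phi (real (M+k)) x (real (n+k)) - phi (real (M+k)) x (lam + real n))
     = \<theta> * real M * (real M + real k + x - lam + 1) / (real M + real k + x)^2
       + x * (\<Sum>n<M. 1 / (x + lam + real n) - 1 / (x + real k + real n))" for M
  proof -
    define T where "T = real M + real k + x"
    have T0: "T \<noteq> 0" using x unfolding T_def by simp
    define c where "c = \<theta> * (2 * T - real k - lam - x)"
    have "(\<Sum>n<M. phi (real (M+k)) x (real (n+k)) - phi (real (M+k)) x (lam + real n))
        = (\<Sum>n<M. c / T^2 - \<theta> / T^2 * (2 * real n) + x * (1 / (x + lam + real n) - 1 / (x + real k + real n)))"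
    proof (rule sum.cong)
      fix n assume "n \<in> {..<M}"
      have a1: "phi (real (M+k)) x (real (n+k)) = ((T - real (n+k))^2 + real (n+k) * x) / T^2 - x / (real (n+k) + x)"
        by (subst phi_alt) (use x in \<open>auto simp: T_def add_ac\<close>)
      have a2: "phi (real (M+k)) x (lam + real n) = ((T - (lam + real n))^2 + (lam + real n) * x) / T^2 - x / (lam + real n + x)"
        by (subst phi_alt) (use x lam in \<open>auto simp: T_def add_ac\<close>)
      have p: "((T - real (n+k))^2 + real (n+k) * x) - ((T - (lam + real n))^2 + (lam + real n) * x)
          = c - \<theta> * (2 * real n)"
        unfolding c_def \<theta>_def by (simp add: algebra_simps power2_eq_square)
      have "phi (real (M+k)) x (real (n+k)) - phi (real (M+k)) x (lam + real n)
          = (((T - real (n+k))^2 + real (n+k) * x) - ((T - (lam + real n))^2 + (lam + real n) * x)) / T^2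
            + x * (1 / (x + lam + real n) - 1 / (x + real k + real n))"
        unfolding a1 a2 by (simp add: diff_divide_distrib add_divide_distrib algebra_simps)
      also have "\<dots> = c / T^2 - \<theta> / T^2 * (2 * real n) + x * (1 / (x + lam + real n) - 1 / (x + real k + real n))"
        unfolding p by (simp add: diff_divide_distrib)
      finally show "phi (real (M+k)) x (real (n+k)) - phi (real (M+k)) x (lam + real n)
          = c / T^2 - \<theta> / T^2 * (2 * real n) + x * (1 / (x + lam + real n) - 1 / (x + real k + real n))" .
    qed simp
    also have "\<dots> = real M * c / T^2 - \<theta> / T^2 * (2 * sum real {..<M}) + x * (\<Sum>n<M. 1 / (x + lam + real n) - 1 / (x + real k + real n))"
    proof -
      have h: "(\<Sum>n<M. \<theta> * (2 * real n) / T^2) = \<theta> * (2 * sum real {..<M}) / T^2"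
        by (simp add: sum_divide_distrib[symmetric] sum_distrib_left[symmetric])
      show ?thesis by (simp add: sum.distrib sum_subtractf sum_distrib_left[symmetric] sum_distrib_right[symmetric] h)
    qed
    also have "\<dots> = \<theta> * real M * (real M + real k + x - lam + 1) / (real M + real k + x)^2
       + x * (\<Sum>n<M. 1 / (x + lam + real n) - 1 / (x + real k + real n))"
    proof -
      have n: "real M * c - \<theta> * (real M * (real M - 1)) = \<theta> * real M * (real M + real k + x - lam + 1)"
        unfolding c_def T_def by (simp add: algebra_simps)
      have "real M * c / T^2 - \<theta> / T^2 * (real M * (real M - 1)) = (real M * c - \<theta> * (real M * (real M - 1))) / T^2"
        by (simp add: diff_divide_distrib)
      then show ?thesis unfolding sum_twice_n n T_def by simp
    qed
    finally show ?thesis .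
  qed
  have LA: "(\<lambda>M. \<Sum>j<k. phi (real (M+k)) x (real j)) \<longlonglongrightarrow> (\<Sum>j<k. real j / (real j + x))"
    by (intro tendsto_sum test_lim)
  have LB: "(\<lambda>M::nat. \<theta> * real M * (real M + real k + x - lam + 1) / (real M + real k + x)^2) \<longlonglongrightarrow> \<theta>"
    by real_asymp
  have "(\<lambda>n. 1 / (x + lam + real n) - 1 / (x + real k + real n)) sums (Digamma (x + real k) - Digamma (x + lam))"
    by (rule Digamma_diff_sums) (use x lam in auto)
  hence LC: "(\<lambda>M. x * (\<Sum>n<M. 1 / (x + lam + real n) - 1 / (x + real k + real n))) \<longlonglongrightarrow> x * (Digamma (x + real k) - Digamma (x + lam))"
    unfolding sums_def by (intro tendsto_mult tendsto_const)
  have lim: "(\<lambda>M. (\<Sum>j<k. phi (real (M+k)) x (real j)) + (\<theta> * real M * (real M + real k + x - lam + 1) / (real M + real k + x)^2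
       + x * (\<Sum>n<M. 1 / (x + lam + real n) - 1 / (x + real k + real n))))
     \<longlonglongrightarrow> (\<Sum>j<k. real j / (real j + x)) + (\<theta> + x * (Digamma (x + real k) - Digamma (x + lam)))"
    by (intro tendsto_add LA LB LC)
  have "(\<Sum>j<k. real j / (real j + x)) + x * (\<Sum>j<k. 1 / (x + real j)) = (\<Sum>j<k. 1)"
    unfolding sum_distrib_left sum.distrib[symmetric]
  proof (rule sum.cong)
    fix j assume "j \<in> {..<k}"
    have "real j + x \<noteq> 0" "x + real j \<noteq> 0" using x by auto
    have "real j / (real j + x) + x * (1 / (x + real j)) = real j / (x + real j) + x / (x + real j)"
      by (simp add: add.commute)
    also have "\<dots> = (real j + x) / (x + real j)" by (rule add_divide_distrib[symmetric])
    also have "\<dots> = 1" using x by (simp add: add.commute)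
    finally show "real j / (real j + x) + x * (1 / (x + real j)) = 1" .
  qed simp
  hence "(\<Sum>j<k. real j / (real j + x)) + (\<theta> + x * (Digamma (x + real k) - Digamma (x + lam)))
      = lam + x * (Digamma x - Digamma (x + lam))"
    unfolding Digamma_add_nat[OF x] \<theta>_def by (simp add: algebra_simps)
  with lim show ?thesis unfolding eq by simp
qed



lemma rhoJ_measurable[measurable]: "rhoJ lam J \<in> borel_measurable borel"
  unfolding rhoJ_def ppart_def by measurable

lemma rho_measurable[measurable]:
  assumes "lam > 1"
  shows "rho lam \<in> borel_measurable borel"
proof (rule borel_measurable_LIMSEQ_real[where u="\<lambda>J. rhoJ lam J"])
  fix t :: real
  show "(\<lambda>J. rhoJ lam J t) \<longlonglongrightarrow> rho lam t"
  proof (rule tendsto_eventually)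
    show "\<forall>\<^sub>F J in sequentially. rhoJ lam J t = rho lam t"
      using eventually_ge_at_top[of "nat \<lceil>t\<rceil>"]
      by eventually_elim (use assms in \<open>auto intro!: rho_eq[symmetric] simp: le_nat_iff\<close>)
  qed
qed simp

lemma nn_main:
  assumes lam: "lam > 1" and x: "x > 0"
  shows "(\<integral>\<^sup>+t. ennreal (indicator {0..} t * (rho lam t / (t + x)^3)) \<partial>lborel)
         = ennreal (lam + x * (Digamma x - Digamma (x + lam)))"
    and "0 \<le> lam + x * (Digamma x - Digamma (x + lam))"
proof -
  define k where "k = nat \<lfloor>lam\<rfloor>"
  define L where "L = lam + x * (Digamma x - Digamma (x + lam))"
  define F where "F t = rho lam t / (t + x)^3" for t
  define I where "I M = (\<Sum>j<k. phi (real (M+k)) x (real j)) + (\<Sum>n<M. phi (real (M+k)) x (real (n+k)) - phi (real (M+k)) x (lam + real n))" for M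
  have Fnn: "t \<ge> 0 \<Longrightarrow> F t \<ge> 0" for t
    unfolding F_def using rho_nonneg[OF lam] x by auto
  have Fm[measurable]: "F \<in> borel_measurable borel" unfolding F_def using lam by measurable
  have hasI: "(F has_integral I M) {0..real (M+k)}" for M
    unfolding F_def I_def by (rule int_rho[OF lam k_def x])
  have Inn: "0 \<le> I M" for M
    by (rule has_integral_nonneg[OF hasI]) (auto intro: Fnn)
  have Ilim: "I \<longlonglongrightarrow> L" unfolding I_def L_def by (rule I_lim[OF lam k_def x])
  show L0: "0 \<le> lam + x * (Digamma x - Digamma (x + lam))"
    using LIMSEQ_le_const[OF Ilim, of 0] Inn unfolding L_def by auto
  define f where "f i t = ennreal (indicator {0..real (i+k)} t * F t)" for i t
  have fm: "f i \<in> borel_measurable lborel" for i unfolding f_def by measurable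
  have inc: "incseq f"
  proof (rule incseq_SucI, rule le_funI)
    fix i t
    show "f i t \<le> f (Suc i) t"
      unfolding f_def using Fnn by (auto intro!: ennreal_leI simp: indicator_def)
  qed
  have sup: "(SUP i. f i t) = ennreal (indicator {0..} t * F t)" for t
  proof (rule antisym)
    show "(SUP i. f i t) \<le> ennreal (indicator {0..} t * F t)"
      by (rule SUP_least) (auto intro!: ennreal_leI simp: f_def indicator_def Fnn)
    show "ennreal (indicator {0..} t * F t) \<le> (SUP i. f i t)"
    proof (rule SUP_upper2[where i="nat \<lceil>t\<rceil>"])
      show "ennreal (indicator {0..} t * F t) \<le> f (nat \<lceil>t\<rceil>) t"
        unfolding f_def by (auto intro!: ennreal_leI simp: indicator_def) linarith
    qed simp
  qed
  have nnf: "integral\<^sup>N lborel (f i) = ennreal (I i)" for i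
    unfolding f_def by (rule nn_integral_has_integral_lebesgue[OF _ hasI]) (auto intro: Fnn)
  have "(\<integral>\<^sup>+t. ennreal (indicator {0..} t * F t) \<partial>lborel) = (SUP i. integral\<^sup>N lborel (f i))"
    unfolding sup[symmetric] by (rule nn_integral_monotone_convergence_SUP[OF inc fm])
  moreover have "(\<lambda>i. integral\<^sup>N lborel (f i)) \<longlonglongrightarrow> (SUP i. integral\<^sup>N lborel (f i))"
  proof (rule LIMSEQ_SUP, rule incseq_SucI)
    fix i show "integral\<^sup>N lborel (f i) \<le> integral\<^sup>N lborel (f (Suc i))"
      by (rule nn_integral_mono) (use inc in \<open>auto simp: incseq_Suc_iff le_fun_def\<close>)
  qed
  moreover have "(\<lambda>i. integral\<^sup>N lborel (f i)) \<longlonglongrightarrow> ennreal L"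
    unfolding nnf by (rule tendsto_ennrealI[OF Ilim])
  ultimately show "(\<integral>\<^sup>+t. ennreal (indicator {0..} t * (rho lam t / (t + x)^3)) \<partial>lborel)
         = ennreal (lam + x * (Digamma x - Digamma (x + lam)))"
    unfolding F_def L_def by (metis LIMSEQ_unique)
qed


theorem lemma3p5:
  fixes lam :: real
  assumes "lam > 1"
  shows "(\<lambda>x. lam + x * (Digamma x - Digamma (x + lam))) \<in> S_class 3"
proof -
  have lam: "lam > 1" by (rule assms)
  define \<mu> where "\<mu> = density (restrict_space lborel {0::real..}) (\<lambda>t. ennreal (rho lam t))"
  have rm[measurable]: "rho lam \<in> borel_measurable (restrict_space lborel {0::real..})"
    by (rule measurable_restrict_space1) (use rho_measurable[OF lam] in simp)
  have sets: "sets \<mu> = sets (restrict_space borel {0::real..})"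
    unfolding \<mu>_def by (simp, intro sets_restrict_space_cong) simp
  have AEnn: "AE t in restrict_space lborel {0::real..}. 0 \<le> rho lam t"
    using rho_nonneg[OF lam] by simp
  have main: "integrable \<mu> (\<lambda>t. 1 / (t + x) powr 3) \<and>
      lam + x * (Digamma x - Digamma (x + lam)) = (\<integral>t. 1 / (t + x) powr 3 \<partial>\<mu>) + 0" if x: "x > 0" for x
  proof -
    define G where "G t = indicator {0..} t * (rho lam t / (t + x)^3)" for t :: real
    have gm: "(\<lambda>t. 1 / (t + x) powr 3) \<in> borel_measurable (restrict_space lborel {0::real..})"
      by (rule measurable_restrict_space1) measurable
    have Fnn: "\<And>t. 0 \<le> t \<Longrightarrow> 0 \<le> rho lam t / (t + x)^3"
      using rho_nonneg[OF lam] x by auto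
    have Gm: "G \<in> borel_measurable lborel" unfolding G_def using lam by measurable
    have eqG: "(\<lambda>t. indicator {0..} t *\<^sub>R (rho lam t *\<^sub>R (1 / (t + x) powr 3))) = G"
    proof
      fix t :: real
      show "indicator {0..} t *\<^sub>R (rho lam t *\<^sub>R (1 / (t + x) powr 3)) = G t"
      proof (cases "t \<ge> 0")
        case True
        then have "(t + x) powr 3 = (t + x)^3" using x by (simp add: powr_numeral)
        then show ?thesis using True by (simp add: G_def)
      qed (simp add: G_def)
    qed
    have ir: "integrable (restrict_space lborel {0::real..}) (\<lambda>t. rho lam t *\<^sub>R (1 / (t + x) powr 3))
        = integrable lborel (\<lambda>t. indicator {0..} t *\<^sub>R (rho lam t *\<^sub>R (1 / (t + x) powr 3)))"
      by (rule integrable_restrict_space) simp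
    have ii: "integral\<^sup>L (restrict_space lborel {0::real..}) (\<lambda>t. rho lam t *\<^sub>R (1 / (t + x) powr 3))
        = integral\<^sup>L lborel (\<lambda>t. indicator {0..} t *\<^sub>R (rho lam t *\<^sub>R (1 / (t + x) powr 3)))"
      by (rule integral_restrict_space) simp
    have "integrable lborel G \<and> integral\<^sup>L lborel G = lam + x * (Digamma x - Digamma (x + lam))"
      using nn_main[OF lam x] Gm Fnn unfolding G_def
      by (subst nn_integral_eq_integrable[symmetric])
         (auto simp: indicator_def)
    moreover have "integrable \<mu> (\<lambda>t. 1 / (t + x) powr 3) = integrable lborel G"
      unfolding \<mu>_def integrable_density[OF gm rm AEnn] ir eqG ..
    moreover have "(\<integral>t. 1 / (t + x) powr 3 \<partial>\<mu>) = integral\<^sup>L lborel G"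
      unfolding \<mu>_def integral_density[OF gm rm AEnn] ii eqG ..
    ultimately show ?thesis by simp
  qed
  show ?thesis
    unfolding S_class_def
    by (rule CollectI, rule exI[of _ \<mu>], rule exI[of _ 0]) (use sets main in auto)
qed


end
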